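(* Let $(Y,\preceq,\prec,\to)$ be a solid vector space. Then (C6) each convergent sequence in $Y$ has a unique limit, and (C7) each convergent sequence $(x_n)$ in $Y$ is bounded, i.e. there exist $a,b\in Y$ with $a\preceq x_n\preceq b$ for all $n$.
   Context: Vector space with convergence: a real vector space $Y$ with a relation $\to$ between sequences in $Y$ and points of $Y$ (write $x_n\to x$, $x$ "a limit"; uniqueness not assumed a priori) such that (C1) $x_n\to x$, $y_n\to y$ imply $x_n+y_n\to x+y$; (C2) $x_n\to x$, $\lambda\in\mathbb R$ imply $\lambda x_n\to\lambda x$; (C3) $\lambda_n\to\lambda$ in $\mathbb R$ imply $\lambda_n x\to\lambda x$. $A\subseteq Y$ is open if $x_n\to x\in A$ implies $x_n\in A$ for all but finitely many $n$; closed if $x_n\to x$, $x_n\in A$ $\forall n$ imply $x\in A$; $A^\circ$ is the union of all open subsets of $A$. A cone is a nonempty closed $K$ with $\lambda K\subseteq K$ ($\lambda\ge0$), $K+K\subseteq K$, $K\cap(-K)=\{0\}$; solid if $K\ne\{0\}$, $K^\circ\ne\emptyset$. A vector ordering is a partial order $\preceq$ with (V1) $x\preceq y\Rightarrow x+z\preceq y+z$; (V2) $\lambda\ge0$, $x\preceq y\Rightarrow\lambda x\preceq\lambda y$; (V3) $x_n\to x$, $y_n\to y$, $x_n\preceq y_n$ $\forall n\Rightarrow x\preceq y$. Solid vector space: positive cone $K=\{x:x\succeq0\}$ solid, with $x\prec y$ iff $y-x\in K^\circ$. *)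

theory Defs
  imports Complex_Main
begin

text \<open>A vector space with convergence: the carrier is a real vector space type 'a,
  and conv X x means X converges to x (limits not assumed unique).\<close>

definition vs_convergence :: "((nat \<Rightarrow> 'a::real_vector) \<Rightarrow> 'a \<Rightarrow> bool) \<Rightarrow> bool" where
  "vs_convergence conv \<longleftrightarrow>
     (\<forall>X Y x y. conv X x \<and> conv Y y \<longrightarrow> conv (\<lambda>n. X n + Y n) (x + y)) \<and>
     (\<forall>X x (c::real). conv X x \<longrightarrow> conv (\<lambda>n. c *\<^sub>R X n) (c *\<^sub>R x)) \<and>
     (\<forall>(L::nat \<Rightarrow> real) l x. L \<longlonglongrightarrow> l \<longrightarrow> conv (\<lambda>n. L n *\<^sub>R x) (l *\<^sub>R x))"

definition conv_open :: "((nat \<Rightarrow> 'a) \<Rightarrow> 'a \<Rightarrow> bool) \<Rightarrow> 'a set \<Rightarrow> bool" where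
  "conv_open conv A \<longleftrightarrow>
     (\<forall>X x. conv X x \<and> x \<in> A \<longrightarrow> finite {n. X n \<notin> A})"

definition conv_closed :: "((nat \<Rightarrow> 'a) \<Rightarrow> 'a \<Rightarrow> bool) \<Rightarrow> 'a set \<Rightarrow> bool" where
  "conv_closed conv A \<longleftrightarrow> (\<forall>X x. conv X x \<and> (\<forall>n. X n \<in> A) \<longrightarrow> x \<in> A)"

definition conv_interior :: "((nat \<Rightarrow> 'a) \<Rightarrow> 'a \<Rightarrow> bool) \<Rightarrow> 'a set \<Rightarrow> 'a set" where
  "conv_interior conv A = \<Union>{U. U \<subseteq> A \<and> conv_open conv U}"

definition conv_cone :: "((nat \<Rightarrow> 'a::real_vector) \<Rightarrow> 'a \<Rightarrow> bool) \<Rightarrow> 'a set \<Rightarrow> bool" where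
  "conv_cone conv K \<longleftrightarrow> K \<noteq> {} \<and> conv_closed conv K \<and>
     (\<forall>(c::real) x. c \<ge> 0 \<and> x \<in> K \<longrightarrow> c *\<^sub>R x \<in> K) \<and>
     (\<forall>x y. x \<in> K \<and> y \<in> K \<longrightarrow> x + y \<in> K) \<and>
     K \<inter> uminus ` K = {0}"

definition solid_cone :: "((nat \<Rightarrow> 'a::real_vector) \<Rightarrow> 'a \<Rightarrow> bool) \<Rightarrow> 'a set \<Rightarrow> bool" where
  "solid_cone conv K \<longleftrightarrow> conv_cone conv K \<and> K \<noteq> {0} \<and> conv_interior conv K \<noteq> {}"

definition vector_ordering ::
  "((nat \<Rightarrow> 'a::real_vector) \<Rightarrow> 'a \<Rightarrow> bool) \<Rightarrow> ('a \<Rightarrow> 'a \<Rightarrow> bool) \<Rightarrow> bool" where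
  "vector_ordering conv le \<longleftrightarrow>
     (\<forall>x. le x x) \<and> (\<forall>x y z. le x y \<and> le y z \<longrightarrow> le x z) \<and>
     (\<forall>x y. le x y \<and> le y x \<longrightarrow> x = y) \<and>
     (\<forall>x y z. le x y \<longrightarrow> le (x + z) (y + z)) \<and>
     (\<forall>(c::real) x y. c \<ge> 0 \<and> le x y \<longrightarrow> le (c *\<^sub>R x) (c *\<^sub>R y)) \<and>
     (\<forall>X Y x y. conv X x \<and> conv Y y \<and> (\<forall>n. le (X n) (Y n)) \<longrightarrow> le x y)"

text \<open>Solid vector space (Y, le, conv): the strict order x \<prec> y iff y - x \<in> interior K
  is derived and not needed for the statement.\<close>

definition solid_vector_space ::
  "((nat \<Rightarrow> 'a::real_vector) \<Rightarrow> 'a \<Rightarrow> bool) \<Rightarrow> ('a \<Rightarrow> 'a \<Rightarrow> bool) \<Rightarrow> bool" where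
  "solid_vector_space conv le \<longleftrightarrow> vs_convergence conv \<and> vector_ordering conv le \<and>
     solid_cone conv {x. le 0 x}"

end

theory Submission
  imports Defs
begin

theorem theorem6p6:
  fixes conv :: "(nat \<Rightarrow> 'a::real_vector) \<Rightarrow> 'a \<Rightarrow> bool"
    and le :: "'a \<Rightarrow> 'a \<Rightarrow> bool"
  assumes "solid_vector_space conv le"
  shows "(\<forall>X x y. conv X x \<and> conv X y \<longrightarrow> x = y) \<and>
         (\<forall>X x. conv X x \<longrightarrow> (\<exists>a b. \<forall>n. le a (X n) \<and> le (X n) b))"
proof -
  have VS: "vs_convergence conv" and VO: "vector_ordering conv le"
    and SC: "solid_cone conv {x. le 0 x}"
    using assms unfolding solid_vector_space_def by auto
  have add: "\<And>X Y x y. conv X x \<Longrightarrow> conv Y y \<Longrightarrow> conv (\<lambda>n. X n + Y n) (x + y)"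
    and smul: "\<And>X x c. conv X x \<Longrightarrow> conv (\<lambda>n. c *\<^sub>R X n) (c *\<^sub>R x)"
    and lim: "\<And>L l x. L \<longlonglongrightarrow> l \<Longrightarrow> conv (\<lambda>n. L n *\<^sub>R x) (l *\<^sub>R x)"
    using VS unfolding vs_convergence_def by blast+
  have refl: "\<And>x. le x x" and trans: "\<And>x y z. le x y \<Longrightarrow> le y z \<Longrightarrow> le x z"
    and anti: "\<And>x y. le x y \<Longrightarrow> le y x \<Longrightarrow> x = y"
    and ladd: "\<And>x y z. le x y \<Longrightarrow> le (x + z) (y + z)"
    and lsc: "\<And>c x y. c \<ge> 0 \<Longrightarrow> le x y \<Longrightarrow> le (c *\<^sub>R x) (c *\<^sub>R y)"
    and llim: "\<And>X Y x y. conv X x \<Longrightarrow> conv Y y \<Longrightarrow> (\<forall>n. le (X n) (Y n)) \<Longrightarrow> le x y"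
    using VO unfolding vector_ordering_def by blast+
  have const: "\<And>c. conv (\<lambda>n. c) c"
  proof -
    fix c :: 'a
    have "conv (\<lambda>n. (\<lambda>n. 1::real) n *\<^sub>R c) (1 *\<^sub>R c)"
      by (rule lim) simp
    then show "conv (\<lambda>n. c) c" by simp
  qed
  have le0: "\<And>a b. le 0 (b - a) \<Longrightarrow> le a b"
  proof -
    fix a b :: 'a assume "le 0 (b - a)"
    from ladd[OF this, of a] show "le a b" by simp
  qed
  from SC obtain U where U: "U \<subseteq> {x. le 0 x}" "conv_open conv U" "U \<noteq> {}"
    unfolding solid_cone_def conv_interior_def by blast
  then obtain e where eU: "e \<in> U" by blast
  have ev: "\<And>Y. conv Y e \<Longrightarrow> \<exists>N. \<forall>n\<ge>N. le 0 (Y n)"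
  proof -
    fix Y assume "conv Y e"
    with U(2) eU have fin: "finite {n. Y n \<notin> U}" unfolding conv_open_def by blast
    obtain N where "\<forall>n\<in>{n. Y n \<notin> U}. n < N"
      using fin finite_nat_set_iff_bounded by blast
    then have "\<forall>n\<ge>N. Y n \<in> U" by (meson mem_Collect_eq not_le)
    with U(1) show "\<exists>N. \<forall>n\<ge>N. le 0 (Y n)" by blast
  qed
  have e0: "le 0 e" using eU U(1) by blast
  have mono: "\<And>c c'. c \<le> c' \<Longrightarrow> le (c *\<^sub>R e) (c' *\<^sub>R e)"
  proof -
    fix c c' :: real assume "c \<le> c'"
    have "0 \<le> c' - c" using \<open>c \<le> c'\<close> by simp
    then have "le ((c' - c) *\<^sub>R 0) ((c' - c) *\<^sub>R e)" by (rule lsc) (rule e0)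
    then have "le 0 (c' *\<^sub>R e - c *\<^sub>R e)" by (simp add: algebra_simps)
    then show "le (c *\<^sub>R e) (c' *\<^sub>R e)" by (rule le0)
  qed
  have ptb: "\<And>z. \<exists>m\<ge>0. le z (m *\<^sub>R e)"
  proof -
    fix z :: 'a
    have "conv (\<lambda>n. inverse (real (Suc n)) *\<^sub>R z) (0 *\<^sub>R z)"
      by (rule lim) (rule LIMSEQ_inverse_real_of_nat)
    then have "conv (\<lambda>n. (-1) *\<^sub>R (inverse (real (Suc n)) *\<^sub>R z)) ((-1) *\<^sub>R (0 *\<^sub>R z))"
      by (rule smul)
    from add[OF const[of e] this]
    have "conv (\<lambda>n. e - inverse (real (Suc n)) *\<^sub>R z) e" by simp
    from ev[OF this] obtain N where "le 0 (e - inverse (real (Suc N)) *\<^sub>R z)" by auto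
    from lsc[OF _ this, of "real (Suc N)"]
    have "le (real (Suc N) *\<^sub>R 0) (real (Suc N) *\<^sub>R (e - inverse (real (Suc N)) *\<^sub>R z))" by simp
    moreover have "real (Suc N) *\<^sub>R (e - inverse (real (Suc N)) *\<^sub>R z) = real (Suc N) *\<^sub>R e - z"
      by (simp add: scaleR_diff_right del: of_nat_Suc)
    ultimately have "le 0 (real (Suc N) *\<^sub>R e - z)" by simp
    then have "le z (real (Suc N) *\<^sub>R e)" by (rule le0)
    then show "\<exists>m\<ge>0. le z (m *\<^sub>R e)" by (intro exI[of _ "real (Suc N)"]) simp
  qed
  then obtain mf where mf: "\<And>z. mf z \<ge> 0 \<and> le z (mf z *\<^sub>R e)" by metis
  have ub: "\<And>X x. conv X x \<Longrightarrow> \<exists>M. \<forall>n. le (X n) (M *\<^sub>R e)"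
  proof -
    fix X x assume cx: "conv X x"
    from smul[OF cx, of "-1"] have "conv (\<lambda>n. (-1) *\<^sub>R X n) ((-1) *\<^sub>R x)" .
    from add[OF const[of "e + x"] this] have "conv (\<lambda>n. (e + x) - X n) e" by simp
    from ev[OF this] obtain N where "\<forall>n\<ge>N. le 0 ((e + x) - X n)" by blast
    then have N: "\<forall>n\<ge>N. le (X n) (e + x)" using le0[of "e + x" "X _"] by blast
    define M where "M = mf (e + x) + (\<Sum>n<N. mf (X n))"
    have "\<forall>n. le (X n) (M *\<^sub>R e)"
    proof
      fix n
      have s0: "(\<Sum>n<N. mf (X n)) \<ge> 0" by (intro sum_nonneg) (use mf in auto)
      show "le (X n) (M *\<^sub>R e)"
      proof (cases "n < N")
        case True
        have "mf (X n) \<le> (\<Sum>n<N. mf (X n))"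
          by (rule member_le_sum) (use True mf in auto)
        then have "mf (X n) \<le> M" unfolding M_def using mf[of "e+x"] by linarith
        then show ?thesis using trans[OF conjunct2[OF mf[of "X n"]] mono] by blast
      next
        case False
        then have "le (X n) (e + x)" using N by auto
        moreover have "mf (e + x) \<le> M" unfolding M_def using s0 by linarith
        ultimately show ?thesis using trans[OF _ trans[OF conjunct2[OF mf[of "e + x"]] mono]] by blast
      qed
    qed
    then show "\<exists>M. \<forall>n. le (X n) (M *\<^sub>R e)" ..
  qed
  show ?thesis
  proof (intro conjI allI impI)
    fix X x y assume "conv X x \<and> conv X y"
    then have "le x y" "le y x" using llim[of X x X y] llim[of X y X x] refl by auto
    then show "x = y" by (rule anti)
  next
    fix X x assume cx: "conv X x"
    obtain M where M: "\<forall>n. le (X n) (M *\<^sub>R e)" using ub[OF cx] by blast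
    obtain M' where M': "\<forall>n. le ((-1) *\<^sub>R X n) (M' *\<^sub>R e)"
      using ub[OF smul[OF cx, of "-1"]] by blast
    have "\<forall>n. le (- (M' *\<^sub>R e)) (X n)"
    proof
      fix n
      from ladd[OF M'[rule_format, of n], of "X n - M' *\<^sub>R e"]
      show "le (- (M' *\<^sub>R e)) (X n)" by (simp add: algebra_simps)
    qed
    with M show "\<exists>a b. \<forall>n. le a (X n) \<and> le (X n) b" by blast
  qed
qed

end
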